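(* Any deterministic distributed dynamic data structure for $2$-hop neighborhood listing that handles edge insertions and deletions requires $\Omega\left(\frac{n}{\log n}\right)$ amortized rounds.
   Context: Highly dynamic network model: a synchronous network on a fixed set $V$ of $n$ nodes with unique identifiers starts as the empty graph; at the beginning of round $i$ the graph is $G_i=(V,E_i)$, obtained from the previous graph by an adversary inserting and/or deleting an arbitrary (unbounded) set of edges. At the start of each round every node is notified only of the insertions/deletions of edges incident to it; then each node may send a message of $O(\log n)$ bits to each of its current neighbors. A distributed dynamic data structure consists of a local part $DS_v$ at each node $v$; at the end of every round, $DS_v$ may be queried and must answer immediately, without any further communication, either with a correct answer or with $\texttt{inconsistent}$. The amortized round complexity is at most $c$ if for every round $i$, the number of rounds up to round $i$ in which at least one node $v$ has $DS_v$ in an inconsistent state, divided by the total number of topology changes that occurred up to round $i$, is at most $c$. Let $E^{v,2}_i$ be the set of edges of $G_i$ incident to $v$ or to a neighbor of $v$. $2$-hop neighborhood listing: $DS_v$ must respond at the end of round $i$ to a query $\{u,w\}$ with $\texttt{true}$ if $\{u,w\}\in E^{v,2}_i$, $\texttt{false}$ otherwise, or $\texttt{inconsistent}$ (equivalently, membership listing of the 3-vertex path $v-u-w$). *)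

theory Defs
  imports Complex_Main
begin

text \<open>The adversary is a sequence of graphs G, G 0 being the empty graph
  and G i the graph of round i (i >= 1).\<close>

definition adversary :: "nat \<Rightarrow> (nat \<Rightarrow> nat set set) \<Rightarrow> bool" where
  "adversary n G \<longleftrightarrow> G 0 = {} \<and>
     (\<forall>i. \<forall>e\<in>G i. \<exists>u w. u < n \<and> w < n \<and> u \<noteq> w \<and> e = {u, w})"

text \<open>A deterministic distributed dynamic data structure: every function takes the identifier
  of the local node first. ds_notify processes the notification (sets of neighbours whose incident
  edge was inserted / deleted), ds_send computes the message (a bit string, or nothing) sent to a
  given current neighbour, ds_recv processes the received messages, ds_query answers a query
  {u,w} locally (None = inconsistent).\<close>

record 's dds =
  ds_init   :: "nat \<Rightarrow> 's"
  ds_notify :: "nat \<Rightarrow> 's \<Rightarrow> nat set \<Rightarrow> nat set \<Rightarrow> 's"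
  ds_send   :: "nat \<Rightarrow> 's \<Rightarrow> nat \<Rightarrow> bool list option"
  ds_recv   :: "nat \<Rightarrow> 's \<Rightarrow> (nat \<Rightarrow> bool list option) \<Rightarrow> 's"
  ds_query  :: "nat \<Rightarrow> 's \<Rightarrow> nat \<Rightarrow> nat \<Rightarrow> bool option"

text \<open>State of node v at the end of round i (round 0 = initial state).\<close>

primrec run :: "'s dds \<Rightarrow> (nat \<Rightarrow> nat set set) \<Rightarrow> nat \<Rightarrow> nat \<Rightarrow> 's" where
  "run A G 0 = ds_init A"
| "run A G (Suc i) =
     (let mid = (\<lambda>w. ds_notify A w (run A G i w)
                       {u. {u, w} \<in> G (Suc i) - G i} {u. {u, w} \<in> G i - G (Suc i)})
      in (\<lambda>v. ds_recv A v (mid v)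
               (\<lambda>u. if {u, v} \<in> G (Suc i) then ds_send A u (mid u) v else None)))"

definition msg_bounded :: "'s dds \<Rightarrow> nat \<Rightarrow> bool" where
  "msg_bounded A b \<longleftrightarrow> (\<forall>v s u m. ds_send A v s u = Some m \<longrightarrow> length m \<le> b)"

definition twohop :: "nat set set \<Rightarrow> nat \<Rightarrow> nat set set" where
  "twohop E v = {e \<in> E. v \<in> e \<or> (\<exists>u. {v, u} \<in> E \<and> u \<in> e)}"

definition answer :: "'s dds \<Rightarrow> (nat \<Rightarrow> nat set set) \<Rightarrow> nat \<Rightarrow> nat \<Rightarrow> nat \<Rightarrow> nat \<Rightarrow> bool option" where
  "answer A G i v u w = ds_query A v (run A G i v) u w"

definition correct_2hop :: "'s dds \<Rightarrow> nat \<Rightarrow> bool" where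
  "correct_2hop A n \<longleftrightarrow> (\<forall>G. adversary n G \<longrightarrow>
     (\<forall>i\<ge>1. \<forall>v<n. \<forall>u<n. \<forall>w<n.
        answer A G i v u w = None \<or> answer A G i v u w = Some ({u, w} \<in> twohop (G i) v)))"

definition inconsistent_round :: "'s dds \<Rightarrow> nat \<Rightarrow> (nat \<Rightarrow> nat set set) \<Rightarrow> nat \<Rightarrow> bool" where
  "inconsistent_round A n G j \<longleftrightarrow> (\<exists>v<n. \<exists>u<n. \<exists>w<n. answer A G j v u w = None)"

definition incons_count :: "'s dds \<Rightarrow> nat \<Rightarrow> (nat \<Rightarrow> nat set set) \<Rightarrow> nat \<Rightarrow> nat" where
  "incons_count A n G i = card {j \<in> {1..i}. inconsistent_round A n G j}"

definition changes :: "(nat \<Rightarrow> nat set set) \<Rightarrow> nat \<Rightarrow> nat" where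
  "changes G i = (\<Sum>j\<in>{1..i}. card ((G j - G (j - 1)) \<union> (G (j - 1) - G j)))"

definition amortized_at_most :: "'s dds \<Rightarrow> nat \<Rightarrow> real \<Rightarrow> bool" where
  "amortized_at_most A n c \<longleftrightarrow> (\<forall>G. adversary n G \<longrightarrow>
     (\<forall>i. real (incons_count A n G i) \<le> c * real (changes G i)))"

end

theory Submission
  imports Defs "HOL-Real_Asymp.Real_Asymp"
begin

definition stp :: "'s dds \<Rightarrow> nat \<Rightarrow> 's \<Rightarrow> nat set \<Rightarrow> bool list option \<Rightarrow> 's" where
  "stp A v s ins m = ds_recv A v (ds_notify A v s ins {}) (\<lambda>u. if u = 0 then m else None)"

primrec iso :: "'s dds \<Rightarrow> nat \<Rightarrow> nat \<Rightarrow> 's" where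
  "iso A v 0 = ds_init A v"
| "iso A v (Suc j) = ds_recv A v (ds_notify A v (iso A v j) {} {}) (\<lambda>u. None)"

definition W :: "'s dds \<Rightarrow> nat \<Rightarrow> nat \<Rightarrow> bool list option list \<Rightarrow> 's" where
  "W A v P ms = foldl (\<lambda>s m. stp A v s {} m) (stp A v (iso A v P) {0} (hd ms)) (tl ms)"

definition mkG :: "nat \<Rightarrow> nat \<Rightarrow> nat set \<Rightarrow> nat \<Rightarrow> nat set set" where
  "mkG k T S j = (if j = 0 then {} else
     (\<lambda>s. {0, s}) ` S \<union> (\<lambda>l. {0, l}) ` {l. 1 \<le> l \<and> l \<le> k \<and> (l - 1) * T < j})"

definition Msg :: "nat \<Rightarrow> bool list option set" where
  "Msg b = insert None (Some ` {m. length m \<le> b})"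

lemma mkG_inc:
  assumes "\<forall>s\<in>S. k < s" "1 \<le> v" "v \<le> k"
  shows "{u, v} \<in> mkG k T S j \<longleftrightarrow> (0 < j \<and> u = 0 \<and> (v - 1) * T < j)"
  using assms unfolding mkG_def by (auto simp: doubleton_eq_iff)

lemma run_iso:
  assumes "\<forall>s\<in>S. k < s" "1 \<le> v" "v \<le> k" "j \<le> (v - 1) * T"
  shows "run A (mkG k T S) j v = iso A v j"
  using assms(4)
proof (induction j)
  case 0
  then show ?case by simp
next
  case (Suc j)
  have e: "\<And>u j'. j' \<le> (v - 1) * T \<Longrightarrow> {u, v} \<notin> mkG k T S j'"
    using mkG_inc[OF assms(1-3)] by auto
  show ?case using Suc e[of "Suc j"] e[of j] by (simp add: Let_def)
qed

lemma run_win: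
  assumes "\<forall>s\<in>S. k < s" "1 \<le> v" "v \<le> k" "msg_bounded A b" "1 \<le> t"
  shows "\<exists>ms. length ms = t \<and> set ms \<subseteq> Msg b \<and>
           run A (mkG k T S) ((v - 1) * T + t) v = W A v ((v - 1) * T) ms"
  using assms(5)
proof (induction t)
  case 0
  then show ?case by simp
next
  case (Suc t)
  define G where "G = mkG k T S"
  define P where "P = (v - 1) * T"
  have inc: "\<And>u j. {u, v} \<in> G j \<longleftrightarrow> (0 < j \<and> u = 0 \<and> P < j)"
    using mkG_inc[OF assms(1-3)] G_def P_def by auto
  define mid where "mid = (\<lambda>w. ds_notify A w (run A G (P + t) w)
      {u. {u, w} \<in> G (Suc (P + t)) - G (P + t)} {u. {u, w} \<in> G (P + t) - G (Suc (P + t))})"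
  define m where "m = ds_send A 0 (mid 0) v"
  have mM: "m \<in> Msg b" using assms(4) unfolding msg_bounded_def Msg_def m_def
    by (cases "ds_send A 0 (mid 0) v") auto
  have fe: "(\<lambda>u. if {u, v} \<in> G (Suc (P + t)) then ds_send A u (mid u) v else None)
          = (\<lambda>u. if u = 0 then m else None)"
    by (rule ext) (auto simp: inc m_def)
  have rs: "run A G (P + Suc t) v = ds_recv A v (mid v) (\<lambda>u. if u = 0 then m else None)"
  proof -
    have "run A G (P + Suc t) v = ds_recv A v (mid v)
       (\<lambda>u. if {u, v} \<in> G (Suc (P + t)) then ds_send A u (mid u) v else None)"
      unfolding mid_def by (simp only: run.simps Let_def add_Suc_right)
    then show ?thesis using fe by simp
  qed
  show ?case
  proof (cases "t = 0")
    case True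
    have d1: "{u. {u, v} \<in> G (Suc (P + t)) - G (P + t)} = {0}" using True by (auto simp: inc)
    have d2: "{u. {u, v} \<in> G (P + t) - G (Suc (P + t))} = {}" using True by (auto simp: inc)
    have ri: "run A G P v = iso A v P" using run_iso[OF assms(1-3), of P T A] G_def P_def by simp
    have "run A G (P + Suc t) v = W A v P [m]"
      using rs True unfolding mid_def d1 d2 by (simp add: W_def stp_def ri)
    then show ?thesis using mM True G_def P_def by (intro exI[of _ "[m]"]) auto
  next
    case False
    then obtain ms where ms: "length ms = t" "set ms \<subseteq> Msg b" "run A G (P + t) v = W A v P ms"
      using Suc G_def P_def by auto
    have d1: "{u. {u, v} \<in> G (Suc (P + t)) - G (P + t)} = {}" using False by (auto simp: inc)
    have d2: "{u. {u, v} \<in> G (P + t) - G (Suc (P + t))} = {}" using False by (auto simp: inc)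
    have ne: "ms \<noteq> []" using ms(1) False by auto
    have "W A v P (ms @ [m]) = stp A v (W A v P ms) {} m"
      using ne by (simp add: W_def)
    then have "run A G (P + Suc t) v = W A v P (ms @ [m])"
      using rs ms(3) unfolding mid_def d1 d2 by (simp add: stp_def)
    then show ?thesis using mM ms G_def P_def by (intro exI[of _ "ms @ [m]"]) auto
  qed
qed

lemma adv_mkG:
  assumes "S \<subseteq> {k<..<n}" "k < n"
  shows "adversary n (mkG k T S)"
  unfolding adversary_def
proof (intro conjI allI ballI)
  show "mkG k T S 0 = {}" by (simp add: mkG_def)
next
  fix i e assume "e \<in> mkG k T S i"
  then have "(\<exists>s\<in>S. e = {0, s}) \<or> (\<exists>l. 1 \<le> l \<and> l \<le> k \<and> e = {0, l})"
    by (auto simp: mkG_def split: if_splits)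
  then show "\<exists>u w. u < n \<and> w < n \<and> u \<noteq> w \<and> e = {u, w}"
  proof
    assume "\<exists>s\<in>S. e = {0, s}"
    then obtain s where "s \<in> S" "e = {0, s}" by blast
    then show ?thesis using assms by (intro exI[of _ 0] exI[of _ s]) auto
  next
    assume "\<exists>l. 1 \<le> l \<and> l \<le> k \<and> e = {0, l}"
    then obtain l where "1 \<le> l" "l \<le> k" "e = {0, l}" by blast
    then show ?thesis using assms by (intro exI[of _ 0] exI[of _ l]) auto
  qed
qed

lemma twohop_mkG:
  assumes "\<forall>s\<in>S. k < s" "1 \<le> v" "v \<le> k" "(v - 1) * T < j" "k < s"
  shows "{0, s} \<in> twohop (mkG k T S j) v \<longleftrightarrow> s \<in> S"
proof
  assume "{0, s} \<in> twohop (mkG k T S j) v"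
  then have "{0, s} \<in> mkG k T S j" by (simp add: twohop_def)
  then show "s \<in> S" using assms by (auto simp: mkG_def doubleton_eq_iff split: if_splits)
next
  assume s: "s \<in> S"
  have j0: "j \<noteq> 0" using assms(4) by auto
  have "{0, s} \<in> mkG k T S j" using s j0 by (auto simp: mkG_def)
  moreover have "{v, 0} \<in> mkG k T S j" using mkG_inc[OF assms(1-3), of 0 T j] assms(4)
    by (simp add: insert_commute)
  ultimately show "{0, s} \<in> twohop (mkG k T S j) v" unfolding twohop_def by blast
qed

lemma changes_mono:
  assumes "\<And>j. G j \<subseteq> G (Suc j)" "\<And>j. finite (G j)" "G 0 = {}"
  shows "changes G i = card (G i)"
proof (induction i)
  case 0
  then show ?case using assms(3) by (simp add: changes_def)
next
  case (Suc i)
  have "changes G (Suc i) = changes G i + card ((G (Suc i) - G i) \<union> (G i - G (Suc i)))"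
    by (simp add: changes_def)
  also have "(G (Suc i) - G i) \<union> (G i - G (Suc i)) = G (Suc i) - G i" using assms(1)[of i] by blast
  also have "card (G (Suc i) - G i) = card (G (Suc i)) - card (G i)"
    using assms(1,2) by (simp add: card_Diff_subset)
  finally show ?case using Suc card_mono[OF assms(2) assms(1)] by simp
qed

lemma card_Msg: "card (Msg b) \<le> 2 ^ (b + 1)" "finite (Msg b)"
proof -
  have e: "{m :: bool list. length m \<le> b} = {m. set m \<subseteq> UNIV \<and> length m \<le> b}" by simp
  have f: "finite {m :: bool list. length m \<le> b}" unfolding e by (rule finite_lists_length_le) simp
  have c: "card {m :: bool list. length m \<le> b} = (\<Sum>i\<le>b. 2 ^ i)"
    unfolding e by (subst card_lists_length_le) auto
  have g: "(\<Sum>i\<le>b. (2::nat) ^ i) + 1 = 2 ^ (b + 1)" by (induction b) auto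
  have "card (Msg b) \<le> card (Some ` {m :: bool list. length m \<le> b}) + 1"
    unfolding Msg_def by (simp add: card_insert_le_m1 card_insert_if f)
  also have "\<dots> \<le> 2 ^ (b + 1)" using c g card_image_le[OF f, of Some] by simp
  finally show "card (Msg b) \<le> 2 ^ (b + 1)" .
  show "finite (Msg b)" using f by (simp add: Msg_def)
qed

lemma core:
  assumes mb: "msg_bounded A b" and cor: "correct_2hop A n" and k1: "1 \<le> k" and kn: "k < n"
    and cnt: "k * T * 2 ^ ((b + 1) * T) < 2 ^ (n - Suc k)"
  shows "\<exists>S. adversary n (mkG k T S) \<and> incons_count A n (mkG k T S) (k * T) = k * T
            \<and> changes (mkG k T S) (k * T) \<le> n"
proof -
  define U where "U = {k<..<n}"
  define D where "D l ms = {s\<in>U. ds_query A l (W A l ((l - 1) * T) ms) 0 s = Some True}" for l ms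
  define L where "L t = {ms. set ms \<subseteq> Msg b \<and> length ms = t}" for t
  define C where "C = (\<Union>l\<in>{1..k}. \<Union>t\<in>{1..T}. D l ` L t)"
  have fL: "finite (L t)" for t unfolding L_def by (rule finite_lists_length_eq) (rule card_Msg(2))
  have cL: "card (L t) \<le> 2 ^ ((b + 1) * T)" if "t \<le> T" for t
  proof -
    have "card (L t) = card (Msg b) ^ t" unfolding L_def by (rule card_lists_length_eq) (rule card_Msg(2))
    also have "\<dots> \<le> (2 ^ (b + 1)) ^ t" by (rule power_mono[OF card_Msg(1)]) simp
    also have "\<dots> \<le> (2 ^ (b + 1)) ^ T" by (rule power_increasing[OF that]) simp
    also have "\<dots> = 2 ^ ((b + 1) * T)" by (simp only: power_mult)
    finally show ?thesis .
  qed
  have fC: "finite C" unfolding C_def using fL by auto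
  have "card C \<le> (\<Sum>l\<in>{1..k}. card (\<Union>t\<in>{1..T}. D l ` L t))"
    unfolding C_def by (rule card_UN_le) simp
  also have "\<dots> \<le> (\<Sum>l\<in>{1..k}. \<Sum>t\<in>{1..T}. card (D l ` L t))"
    by (intro sum_mono card_UN_le) simp
  also have "\<dots> \<le> (\<Sum>l\<in>{1..k}. \<Sum>t\<in>{1..T}. (2::nat) ^ ((b + 1) * T))"
    by (intro sum_mono order.trans[OF card_image_le[OF fL] cL]) auto
  also have "\<dots> = k * T * 2 ^ ((b + 1) * T)" by simp
  finally have cC: "card C < 2 ^ (n - Suc k)" using cnt by linarith
  have "\<not> Pow U \<subseteq> C"
  proof
    assume "Pow U \<subseteq> C"
    then have "card (Pow U) \<le> card C" using fC by (rule card_mono[rotated])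
    then show False using cC by (simp add: U_def card_Pow)
  qed
  then obtain S where S: "S \<subseteq> U" "S \<notin> C" by blast
  define G where "G = mkG k T S"
  have Sk: "\<forall>s\<in>S. k < s" using S U_def by auto
  have adv: "adversary n G" using adv_mkG[OF _ kn] S U_def G_def by simp
  have inc: "inconsistent_round A n G j" if j: "j \<in> {1..k * T}" for j
  proof (rule ccontr)
    assume nc: "\<not> inconsistent_round A n G j"
    have T0: "0 < T" using j by (cases T) auto
    define v where "v = (j - 1) div T + 1"
    define t where "t = (j - 1) mod T + 1"
    have jv: "j = (v - 1) * T + t" using j unfolding v_def t_def
      by (simp add: div_mult_mod_eq[of "j - 1" T, symmetric])
    have v1: "1 \<le> v" "v \<le> k" using j T0 unfolding v_def
      by (auto simp: div_less_iff_less_mult Suc_le_eq)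
    have t1: "1 \<le> t" "t \<le> T" using T0 unfolding t_def by (auto simp: Suc_le_eq)
    obtain ms where ms: "length ms = t" "set ms \<subseteq> Msg b"
        "run A G j v = W A v ((v - 1) * T) ms"
      using run_win[OF Sk v1 mb t1(1), of T] jv G_def by auto
    have vn: "v < n" using v1 kn by simp
    have "S = D v ms"
    proof (intro set_eqI iffI)
      fix s assume "s \<in> S"
      then have sU: "s \<in> U" using S by blast
      then have sn: "s < n" "k < s" using U_def by auto
      have "answer A G j v 0 s \<noteq> None" using nc vn sn kn unfolding inconsistent_round_def by auto
      moreover have "answer A G j v 0 s = None \<or> answer A G j v 0 s = Some ({0, s} \<in> twohop (G j) v)"
        using cor adv j vn sn kn unfolding correct_2hop_def by auto
      ultimately have "answer A G j v 0 s = Some ({0, s} \<in> twohop (G j) v)" by (elim disjE) simp_all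
      then have "answer A G j v 0 s = Some True" using twohop_mkG[OF Sk v1, of T j s] \<open>s \<in> S\<close> jv t1 sn G_def
        by simp
      then show "s \<in> D v ms" using sU ms(3) unfolding D_def answer_def by simp
    next
      fix s assume "s \<in> D v ms"
      then have sU: "s \<in> U" and q: "ds_query A v (W A v ((v - 1) * T) ms) 0 s = Some True"
        unfolding D_def by auto
      then have sn: "s < n" "k < s" using U_def by auto
      have "answer A G j v 0 s = Some True" using q ms(3) unfolding answer_def by simp
      moreover have "answer A G j v 0 s = None \<or> answer A G j v 0 s = Some ({0, s} \<in> twohop (G j) v)"
        using cor adv j vn sn kn unfolding correct_2hop_def by auto
      ultimately show "s \<in> S" using twohop_mkG[OF Sk v1, of T j s] jv t1 sn G_def by auto
    qed
    moreover have "D v ms \<in> C"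
    proof -
      have "ms \<in> L t" unfolding L_def using ms by simp
      then have "D v ms \<in> D v ` L t" by (rule imageI)
      then show ?thesis unfolding C_def
        by (intro UN_I[of v] UN_I[of t]) (use v1 t1 in auto)
    qed
    ultimately have "S \<in> C" by (simp only:)
    then show False using S(2) by (rule notE[rotated])
  qed
  have ic: "incons_count A n G (k * T) = k * T"
  proof -
    have "{j \<in> {1..k * T}. inconsistent_round A n G j} = {1..k * T}" using inc by blast
    then show ?thesis unfolding incons_count_def by simp
  qed
  have sub: "G j \<subseteq> (\<lambda>x. {0, x}) ` {..<n}" for j
    using S kn unfolding G_def mkG_def U_def by auto
  have fG: "finite (G j)" for j using finite_subset[OF sub] by blast
  have mono: "G j \<subseteq> G (Suc j)" for j unfolding G_def mkG_def by auto
  have "changes G (k * T) = card (G (k * T))"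
    by (rule changes_mono[of G, OF mono fG]) (simp add: G_def mkG_def)
  also have "\<dots> \<le> card ((\<lambda>x. {0, x}) ` {..<n})" by (rule card_mono[OF _ sub]) simp
  also have "\<dots> \<le> n" using card_image_le[of "{..<n}" "\<lambda>x. {0, x}"] by simp
  finally show ?thesis using adv ic G_def by blast
qed

lemma asym_facts:
  fixes B :: nat
  shows "\<exists>n0. \<forall>n\<ge>n0. 4 \<le> n \<and> 1 \<le> log 2 (real n) \<and>
           real n ^ 2 * 2 powr (real n / 8) < 2 powr (real n / 2 - 1) \<and>
           32 * (real B + 1) * log 2 (real n) < real n"
proof -
  have e1: "eventually (\<lambda>n::nat. 4 \<le> n) at_top" by (rule eventually_ge_at_top)
  have e2: "eventually (\<lambda>n::nat. 1 \<le> log 2 (real n)) at_top" by real_asymp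
  have e3: "eventually (\<lambda>n::nat. real n ^ 2 * 2 powr (real n / 8) < 2 powr (real n / 2 - 1)) at_top"
    by real_asymp
  have tl: "((\<lambda>n::nat. log 2 (real n) / real n) \<longlongrightarrow> 0) at_top" by real_asymp
  have pos: "(0::real) < 1 / (32 * (real B + 1))" by simp
  have e4': "eventually (\<lambda>n::nat. log 2 (real n) / real n < 1 / (32 * (real B + 1))) at_top"
    by (rule order_tendstoD(2)[OF tl pos])
  have e4: "eventually (\<lambda>n::nat. 32 * (real B + 1) * log 2 (real n) < real n) at_top"
    using e4' e1
  proof eventually_elim
    case (elim n)
    then have np: "0 < real n" by simp
    from elim(1) have "log 2 (real n) < real n / (32 * (real B + 1))"
      using np by (simp add: divide_simps mult.commute)
    then show ?case by (simp add: field_simps)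
  qed
  have "eventually (\<lambda>n::nat. 4 \<le> n \<and> 1 \<le> log 2 (real n) \<and>
           real n ^ 2 * 2 powr (real n / 8) < 2 powr (real n / 2 - 1) \<and>
           32 * (real B + 1) * log 2 (real n) < real n) at_top"
    using e1 e2 e3 e4 by eventually_elim auto
  then show ?thesis by (simp add: eventually_at_top_linorder)
qed

theorem corollary6:
  fixes B :: nat
  shows "\<exists>c>0. \<exists>n0. \<forall>n\<ge>n0. \<forall>A :: 's dds.
           msg_bounded A (B * nat \<lceil>log 2 (real n)\<rceil>) \<longrightarrow> correct_2hop A n \<longrightarrow>
           \<not> amortized_at_most A n (c * real n / log 2 (real n))"
proof -
  define c :: real where "c = 1 / (256 * (real B + 1))"
  obtain n0 where n0: "\<And>n. n \<ge> n0 \<Longrightarrow> 4 \<le> n \<and> 1 \<le> log 2 (real n) \<and>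
           real n ^ 2 * 2 powr (real n / 8) < 2 powr (real n / 2 - 1) \<and>
           32 * (real B + 1) * log 2 (real n) < real n"
    using asym_facts[of B] by blast
  have "\<forall>n\<ge>n0. \<forall>A :: 's dds.
           msg_bounded A (B * nat \<lceil>log 2 (real n)\<rceil>) \<longrightarrow> correct_2hop A n \<longrightarrow>
           \<not> amortized_at_most A n (c * real n / log 2 (real n))"
  proof (intro allI impI)
    fix n :: nat and A :: "'s dds"
    assume nn0: "n \<ge> n0" and mb: "msg_bounded A (B * nat \<lceil>log 2 (real n)\<rceil>)"
      and cor: "correct_2hop A n"
    define lg where "lg = log 2 (real n)"
    define L where "L = nat \<lceil>lg\<rceil>"
    define b where "b = B * L"
    define k where "k = n div 2"
    define T where "T = n div (8 * (B + 1) * L)"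
    have n4: "4 \<le> n" and lg1: "1 \<le> lg"
      and F2: "real n ^ 2 * 2 powr (real n / 8) < 2 powr (real n / 2 - 1)"
      and F3: "32 * (real B + 1) * lg < real n"
      using n0[OF nn0] lg_def by auto
    have RL: "real L = of_int \<lceil>lg\<rceil>" using lg1 unfolding L_def by simp
    have L1: "lg \<le> real L" "real L < lg + 1" using RL by linarith+
    have Lpos: "1 \<le> L" using L1 lg1 by linarith
    have k1: "1 \<le> k" "k < n" using n4 unfolding k_def by auto
    have bT: "8 * ((b + 1) * T) \<le> n"
    proof -
      have "b + 1 \<le> (B + 1) * L" using Lpos unfolding b_def by simp
      then have "(b + 1) * T \<le> (B + 1) * L * T" by (rule mult_le_mono1)
      then have "8 * ((b + 1) * T) \<le> T * (8 * (B + 1) * L)" by (simp only: mult.commute mult.left_commute mult.assoc)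
      also have "\<dots> \<le> n" unfolding T_def by (rule div_times_less_eq_dividend)
      finally show ?thesis .
    qed
    have kTn: "k \<le> n" "T \<le> n" unfolding k_def T_def by auto
    have cnt: "k * T * 2 ^ ((b + 1) * T) < 2 ^ (n - Suc k)"
    proof -
      have "real (k * T * 2 ^ ((b + 1) * T)) = real k * real T * 2 powr real ((b + 1) * T)"
        using powr_realpow[of 2 "(b + 1) * T"] by simp
      also have "\<dots> \<le> real n * real n * 2 powr (real n / 8)"
      proof (rule mult_mono)
        show "real k * real T \<le> real n * real n" using kTn by (intro mult_mono) auto
        show "2 powr real ((b + 1) * T) \<le> 2 powr (real n / 8)"
        proof (rule powr_mono)
          have "real (8 * ((b + 1) * T)) \<le> real n" using bT by (simp only: of_nat_le_iff)
          then show "real ((b + 1) * T) \<le> real n / 8" by simp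
        qed simp
      qed auto
      also have "\<dots> < 2 powr (real n / 2 - 1)" using F2 by (simp add: power2_eq_square)
      also have "\<dots> \<le> 2 powr real (n - Suc k)"
      proof (rule powr_mono)
        have "real (n - Suc k) = real n - real k - 1" using k1 by simp
        moreover have "real k \<le> real n / 2" unfolding k_def by linarith
        ultimately show "real n / 2 - 1 \<le> real (n - Suc k)" by simp
      qed simp
      also have "\<dots> = real (2 ^ (n - Suc k))" using powr_realpow[of 2 "n - Suc k"] by simp
      finally show ?thesis by (simp only: of_nat_less_iff)
    qed
    obtain S where S: "adversary n (mkG k T S)" "incons_count A n (mkG k T S) (k * T) = k * T"
      "changes (mkG k T S) (k * T) \<le> n"
      using core[OF _ cor k1 cnt] mb b_def L_def lg_def by auto
    define X where "X = real n / (32 * (real B + 1) * lg)"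
    have lgpos: "0 < lg" using lg1 by simp
    have dpos: "0 < 32 * (real B + 1) * lg" using lgpos by simp
    have X1: "1 < X" unfolding X_def
      using F3 dpos less_divide_eq[of 1 "real n" "32 * (real B + 1) * lg"] by simp
    have TX: "X < real T"
    proof -
      define m where "m = 8 * (B + 1) * L"
      have mpos: "0 < m" using Lpos unfolding m_def by simp
      have "n < (T + 1) * m"
      proof -
        have e: "n div m * m + n mod m = n" by (rule div_mult_mod_eq)
        have "n mod m < m" using mpos by simp
        then have "n < n div m * m + m" using e by linarith
        then show ?thesis unfolding T_def m_def[symmetric] by (simp add: algebra_simps)
      qed
      then have "real n < (real T + 1) * real m" by (metis of_nat_1 of_nat_add of_nat_less_iff of_nat_mult)
      also have "real m \<le> 16 * (real B + 1) * lg"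
      proof -
        have "real L \<le> 2 * lg" using L1 lg1 by linarith
        then have h: "8 * (real B + 1) * real L \<le> 8 * (real B + 1) * (2 * lg)"
          by (intro mult_left_mono) auto
        have "real m = 8 * (real B + 1) * real L" unfolding m_def by simp
        also have "\<dots> \<le> 8 * (real B + 1) * (2 * lg)" by (rule h)
        also have "\<dots> = 16 * (real B + 1) * lg" by simp
        finally show ?thesis .
      qed
      finally have "real n < (real T + 1) * (16 * (real B + 1) * lg)"
        by (simp add: mult_left_mono)
      moreover have d16: "0 < 16 * (real B + 1) * lg" using lgpos by simp
      ultimately have "real n / (16 * (real B + 1) * lg) < real T + 1"
        by (simp add: divide_less_eq)
      moreover have "2 * X = real n / (16 * (real B + 1) * lg)"
      proof -
        have e: "32 * (real B + 1) * lg = 2 * (16 * (real B + 1) * lg)" by simp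
        show ?thesis unfolding X_def e by (simp only: times_divide_eq_right mult_divide_mult_cancel_left_if) simp
      qed
      ultimately have "2 * X < real T + 1" by simp
      then show ?thesis using X1 by simp
    qed
    have kn4: "real n / 4 \<le> real k" unfolding k_def using n4 by linarith
    have "real (incons_count A n (mkG k T S) (k * T)) = real k * real T" using S(2) by simp
    also have "real k * real T \<ge> real n / 4 * X" using kn4 TX X1 by (intro mult_mono) auto
    finally have big: "real n / 4 * X \<le> real (incons_count A n (mkG k T S) (k * T))" .
    have cpos: "0 \<le> c * real n / lg" unfolding c_def using lgpos by simp
    have "c * real n / lg * real (changes (mkG k T S) (k * T)) \<le> c * real n / lg * real n"
      using S(3) cpos by (intro mult_left_mono) auto
    also have "c * real n / lg * real n = real n / 4 * X / 2"
      unfolding c_def X_def using lgpos by (simp add: field_simps)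
    also have "\<dots> < real n / 4 * X" using X1 n4 by simp
    finally have "c * real n / lg * real (changes (mkG k T S) (k * T))
         < real (incons_count A n (mkG k T S) (k * T))" using big by linarith
    then show "\<not> amortized_at_most A n (c * real n / log 2 (real n))"
      using S(1) unfolding amortized_at_most_def lg_def by (metis not_le)
  qed
  moreover have "c > 0" unfolding c_def by simp
  ultimately show ?thesis by blast
qed

end
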